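(* Let $h:\mathcal{I}\to\mathcal{J}$ have a non-decreasing upper tail with threshold $c\in(\inf\mathcal{I},\sup\mathcal{I})$, let $h^{\star}=\sup_{x<c,\,x\in\mathcal{I}}h(x)$, and define $\tilde h:\mathcal{I}\to\mathcal{J}$ by $\tilde h(x)=h^{\star}$ if $x<c$, $\tilde h(c)=\max\{h(c),h^{\star}\}$, and $\tilde h(x)=h(x)$ if $x>c$. Then: (1) if $h$ is left-continuous, $\tilde h$ is left-continuous; (2) if $h$ is right-continuous, $\tilde h$ is right-continuous.
   Context: $\mathcal{I},\mathcal{J}\subseteq\mathbb{R}$ intervals; $h$ is real-valued whose discontinuities (if any) are jumps at which it is left- or right-continuous. A function $h:\mathcal{I}\to\mathcal{J}$ has a non-decreasing upper tail if there exists $x'\in\mathcal{I}$ such that (1) $h(x)\le h(x')$ for all $x\in\mathcal{I}$ with $x<x'$, and (2) $h(x_1)\le h(x_2)$ for all $x_1,x_2\in\mathcal{I}$ with $x'\le x_1\le x_2$. Its threshold $c$ is the infimum of the (assumed nonempty) set of all such $x'$. *)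

theory Defs
  imports "HOL-Analysis.Analysis"
begin

definition tail_witness :: "real set \<Rightarrow> (real \<Rightarrow> real) \<Rightarrow> real \<Rightarrow> bool" where
  "tail_witness I h x' \<longleftrightarrow> x' \<in> I \<and>
     (\<forall>x\<in>I. x < x' \<longrightarrow> h x \<le> h x') \<and>
     (\<forall>x1\<in>I. \<forall>x2\<in>I. x' \<le> x1 \<and> x1 \<le> x2 \<longrightarrow> h x1 \<le> h x2)"

definition has_nondec_upper_tail :: "real set \<Rightarrow> (real \<Rightarrow> real) \<Rightarrow> bool" where
  "has_nondec_upper_tail I h \<longleftrightarrow> (\<exists>x'. tail_witness I h x')"

definition tail_threshold :: "real set \<Rightarrow> (real \<Rightarrow> real) \<Rightarrow> real" where
  "tail_threshold I h = Inf {x'. tail_witness I h x'}"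

definition left_continuous_on :: "real set \<Rightarrow> (real \<Rightarrow> real) \<Rightarrow> bool" where
  "left_continuous_on I h \<longleftrightarrow> (\<forall>x\<in>I. (h \<longlongrightarrow> h x) (at x within (I \<inter> {..<x})))"

definition right_continuous_on :: "real set \<Rightarrow> (real \<Rightarrow> real) \<Rightarrow> bool" where
  "right_continuous_on I h \<longleftrightarrow> (\<forall>x\<in>I. (h \<longlongrightarrow> h x) (at x within (I \<inter> {x<..})))"

definition hstar :: "real set \<Rightarrow> (real \<Rightarrow> real) \<Rightarrow> real \<Rightarrow> real" where
  "hstar I h c = Sup (h ` {x\<in>I. x < c})"

definition htilde :: "real set \<Rightarrow> (real \<Rightarrow> real) \<Rightarrow> real \<Rightarrow> real \<Rightarrow> real" where
  "htilde I h c x = (if x < c then hstar I h c else if x = c then max (h c) (hstar I h c) else h x)"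

end

theory Submission
  imports Defs
begin

lemma tw_up:
  assumes "tail_witness I h w" "z \<in> I" "w \<le> z"
  shows "tail_witness I h z"
  unfolding tail_witness_def
proof (intro conjI ballI impI)
  have w: "w \<in> I" "\<And>x. x \<in> I \<Longrightarrow> x < w \<Longrightarrow> h x \<le> h w"
    "\<And>x1 x2. x1 \<in> I \<Longrightarrow> x2 \<in> I \<Longrightarrow> w \<le> x1 \<and> x1 \<le> x2 \<Longrightarrow> h x1 \<le> h x2"
    using assms(1) unfolding tail_witness_def by auto
  show "z \<in> I" by (rule assms(2))
  show "h x \<le> h z" if "x \<in> I" "x < z" for x
  proof (cases "x < w")
    case True
    then have "h x \<le> h w" using w(2) that by blast
    also have "h w \<le> h z" using w(3)[of w z] w(1) assms by simp
    finally show ?thesis .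
  next
    case False
    then show ?thesis using w(3)[of x z] that assms by simp
  qed
  show "h x1 \<le> h x2" if "x1 \<in> I" "x2 \<in> I" "z \<le> x1 \<and> x1 \<le> x2" for x1 x2
    using w(3)[of x1 x2] that assms by simp
qed

theorem lemma3p5:
  fixes I J :: "real set" and h :: "real \<Rightarrow> real" and c :: real
  assumes "is_interval I" and "is_interval J" and "h ` I \<subseteq> J"
    and "has_nondec_upper_tail I h"
    and "c = tail_threshold I h"
    and "\<exists>a\<in>I. a < c" and "\<exists>b\<in>I. c < b"
  shows "(left_continuous_on I h \<longrightarrow> left_continuous_on I (htilde I h c))
       \<and> (right_continuous_on I h \<longrightarrow> right_continuous_on I (htilde I h c))"
proof -
  define W where "W = {x'. tail_witness I h x'}"
  have Wne: "W \<noteq> {}" using assms(4) unfolding W_def has_nondec_upper_tail_def by auto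
  have cW: "c = Inf W" using assms(5) unfolding W_def tail_threshold_def by simp
  obtain a where a: "a \<in> I" "a < c" using assms(6) by auto
  obtain b where b: "b \<in> I" "c < b" using assms(7) by auto
  have ivl: "\<And>x y z. x \<in> I \<Longrightarrow> y \<in> I \<Longrightarrow> x \<le> z \<Longrightarrow> z \<le> y \<Longrightarrow> z \<in> I"
    using assms(1) unfolding is_interval_1 by blast
  have cI: "c \<in> I" using ivl[OF a(1) b(1)] a b by simp
  have zW: "tail_witness I h z" if "z \<in> I" "c < z" for z
  proof -
    have "\<exists>w\<in>W. w < z"
    proof (cases "bdd_below W")
      case True
      then show ?thesis using cInf_less_iff[OF Wne True] that cW by auto
    next
      case False
      then show ?thesis unfolding bdd_below_def by (meson not_le)
    qed
    then obtain w where "w \<in> W" "w < z" by auto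
    then show ?thesis using tw_up[of I h w z] that unfolding W_def by auto
  qed
  have hyz: "h y \<le> h z" if "y \<in> I" "y < c" "z \<in> I" "c < z" for y z
    using zW[OF that(3,4)] that unfolding tail_witness_def by auto
  define S where "S = h ` {x\<in>I. x < c}"
  have Sne: "S \<noteq> {}" using a unfolding S_def by auto
  have Sbdd: "bdd_above S" unfolding S_def bdd_above_def using hyz b by blast
  have hs: "hstar I h c = Sup S" unfolding hstar_def S_def by simp
  have le_hs: "h y \<le> hstar I h c" if "y \<in> I" "y < c" for y
    unfolding hs using cSup_upper[OF _ Sbdd] that S_def by auto
  have ht_lt: "htilde I h c y = hstar I h c" if "y < c" for y
    using that unfolding htilde_def by simp
  have ht_gt: "htilde I h c y = h y" if "y > c" for y
    using that unfolding htilde_def by simp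
  have abI: "{a<..<b} \<subseteq> I" using ivl[OF a(1) b(1)] by auto
  have abI': "\<And>x. a < x \<Longrightarrow> x < b \<Longrightarrow> x \<in> I" using abI by auto
  have atL: "at c within (I \<inter> {..<c}) = at_left c"
  proof (rule at_within_nhd[of _ "{a<..<b}"])
    show "I \<inter> {..<c} \<inter> {a<..<b} - {c} = {..<c} \<inter> {a<..<b} - {c}" using abI by blast
  qed (use a b in auto)
  have atR: "at c within (I \<inter> {c<..}) = at_right c"
  proof (rule at_within_nhd[of _ "{a<..<b}"])
    show "I \<inter> {c<..} \<inter> {a<..<b} - {c} = {c<..} \<inter> {a<..<b} - {c}" using abI by blast
  qed (use a b in auto)
  show ?thesis
  proof (intro conjI impI)
    assume L: "left_continuous_on I h"
    show "left_continuous_on I (htilde I h c)"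
      unfolding left_continuous_on_def
    proof
      fix x assume xI: "x \<in> I"
      consider "x < c" | "x = c" | "x > c" by linarith
      then show "(htilde I h c \<longlongrightarrow> htilde I h c x) (at x within I \<inter> {..<x})"
      proof cases
        case 1
        have "eventually (\<lambda>y. htilde I h c y = htilde I h c x) (at x within I \<inter> {..<x})"
          unfolding eventually_at
          by (rule exI[of _ 1]) (use 1 ht_lt in simp)
        then show ?thesis by (rule tendsto_eventually)
      next
        case 2
        have lim: "(h \<longlongrightarrow> h c) (at_left c)" using L cI atL unfolding left_continuous_on_def by (metis (no_types))
        have ev: "eventually (\<lambda>y. h y \<le> hstar I h c) (at_left c)"
          by (rule eventually_mono[OF eventually_at_left_real[OF a(2)]]) (use b a in \<open>simp add: le_hs abI'\<close>)
        have "h c \<le> hstar I h c"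
          by (rule tendsto_upperbound[OF lim ev]) (simp add: trivial_limit_at_left_real)
        then have hc: "htilde I h c c = hstar I h c" unfolding htilde_def by simp
        have "eventually (\<lambda>y. htilde I h c y = htilde I h c c) (at_left c)"
          by (rule eventually_mono[OF eventually_at_left_real[OF a(2)]]) (use hc ht_lt in simp)
        then show ?thesis using 2 atL by (simp add: tendsto_eventually)
      next
        case 3
        have lim: "(h \<longlongrightarrow> h x) (at x within I \<inter> {..<x})" using L xI unfolding left_continuous_on_def by blast
        have ev: "eventually (\<lambda>y. h y = htilde I h c y) (at x within I \<inter> {..<x})"
          unfolding eventually_at
          by (rule exI[of _ "x - c"]) (use 3 ht_gt in \<open>auto simp: dist_real_def\<close>)
        show ?thesis using Lim_transform_eventually[OF lim ev] ht_gt[OF 3] by simp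
      qed
    qed
  next
    assume R: "right_continuous_on I h"
    show "right_continuous_on I (htilde I h c)"
      unfolding right_continuous_on_def
    proof
      fix x assume xI: "x \<in> I"
      consider "x < c" | "x = c" | "x > c" by linarith
      then show "(htilde I h c \<longlongrightarrow> htilde I h c x) (at x within I \<inter> {x<..})"
      proof cases
        case 1
        have "eventually (\<lambda>y. htilde I h c y = htilde I h c x) (at x within I \<inter> {x<..})"
          unfolding eventually_at
          by (rule exI[of _ "c - x"]) (use 1 ht_lt in \<open>auto simp: dist_real_def\<close>)
        then show ?thesis by (rule tendsto_eventually)
      next
        case 2
        have lim: "(h \<longlongrightarrow> h c) (at_right c)" using R cI atR unfolding right_continuous_on_def by (metis (no_types))
        have yc: "h y \<le> h c" if "y \<in> I" "y < c" for y
        proof -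
          have ev: "eventually (\<lambda>z. h y \<le> h z) (at_right c)"
            by (rule eventually_mono[OF eventually_at_right_real[OF b(2)]]) (use b a that in \<open>simp add: hyz abI'\<close>)
          show ?thesis
            by (rule tendsto_lowerbound[OF lim ev]) (simp add: trivial_limit_at_right_real)
        qed
        have "hstar I h c \<le> h c" unfolding hs
          by (rule cSup_least[OF Sne]) (use yc in \<open>auto simp: S_def\<close>)
        then have hc: "htilde I h c c = h c" unfolding htilde_def by simp
        have ev: "eventually (\<lambda>y. h y = htilde I h c y) (at_right c)"
          by (rule eventually_mono[OF eventually_at_right_real[OF b(2)]]) (use ht_gt in simp)
        show ?thesis using Lim_transform_eventually[OF lim ev] hc 2 atR by simp
      next
        case 3
        have lim: "(h \<longlongrightarrow> h x) (at x within I \<inter> {x<..})" using R xI unfolding right_continuous_on_def by blast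
        have ev: "eventually (\<lambda>y. h y = htilde I h c y) (at x within I \<inter> {x<..})"
          unfolding eventually_at
          by (rule exI[of _ 1]) (use 3 ht_gt in simp)
        show ?thesis using Lim_transform_eventually[OF lim ev] ht_gt[OF 3] by simp
      qed
    qed
  qed
qed

end
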